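(* Consider configurations consisting only of colored chips (no jokers, no dominoes). Call such a configuration $E$ sufficient if $E$ achieves $3$ dominoes, and minimal sufficient if $E$ is sufficient and no proper sub-configuration of $E$ (i.e. one obtained by removing at least one chip) achieves $3$ dominoes. Then, up to permutation of the three colors, there are exactly two minimal sufficient configurations: $M=(3,3,1)$ (three chips of one color, three of a second, one of the third) and $N=(3,2,2)$. Moreover, for a game with $p\ge1$ players with initial configuration $I$ (consisting of $2p$ colored chips), survival is possible if and only if $I$ contains (componentwise, after some permutation of colors) $M$ or $N$. Finally, a game with $p$ players is non-trivial if and only if $p\ge 4$.
   Context: Game model: there are colored chips of three colors, "jokers", and dominoes. A configuration is a tuple $(a,b,c,x,d)$ of nonnegative integers: $a,b,c$ colored chips of the three colors, $x$ jokers, $d$ dominoes. Two kinds of exchanges are allowed: Rule 1: remove three chips, consisting of some number $j\in\{0,1,2,3\}$ of jokers together with $3-j$ colored chips of pairwise distinct colors, and add one domino and one joker. Rule 2: if $d\ge 3$, remove three dominoes and add seven jokers. (Jokers model chips returned by the exchanges, whose color may be freely chosen.) A configuration $E$ yields $F$ if $F$ is obtained from $E$ by a finite (possibly empty) sequence of exchanges; $E$ achieves $F$ if $E$ yields some configuration that is componentwise $\ge F$. A game with $p$ players starts from an initial configuration $I$ consisting of $2p$ colored chips (any color distribution), no jokers and no dominoes; "survival" means $I$ achieves $p$ dominoes. A game with $p$ players is trivial if survival is impossible for every such initial configuration $I$, and non-trivial otherwise. *)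

theory Defs
  imports Main "HOL-Library.Multiset"
begin

text \<open>A configuration (a,b,c,x,d): a,b,c colored chips of the three colors,
  x jokers, d dominoes.\<close>
type_synonym config = "nat \<times> nat \<times> nat \<times> nat \<times> nat"

text \<open>Rule 1: remove j jokers and 3-j colored chips of pairwise
  distinct colors (u,v,w \<in> {0,1} indicate which colors are removed), add one
  domino and one joker.\<close>
inductive step :: "config \<Rightarrow> config \<Rightarrow> bool" where
  rule1: "\<lbrakk> u \<le> 1; v \<le> 1; w \<le> 1; u + v + w + j = 3;
           u \<le> a; v \<le> b; w \<le> c; j \<le> x \<rbrakk> \<Longrightarrow>
          step (a, b, c, x, d) (a - u, b - v, c - w, x - j + 1, d + 1)"
| rule2: "d \<ge> 3 \<Longrightarrow> step (a, b, c, x, d) (a, b, c, x + 7, d - 3)"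

definition yields :: "config \<Rightarrow> config \<Rightarrow> bool" where
  "yields E F \<longleftrightarrow> step\<^sup>*\<^sup>* E F"

definition cfg_le :: "config \<Rightarrow> config \<Rightarrow> bool" where
  "cfg_le F G \<longleftrightarrow> (case F of (a,b,c,x,d) \<Rightarrow> case G of (a',b',c',x',d') \<Rightarrow>
      a \<le> a' \<and> b \<le> b' \<and> c \<le> c' \<and> x \<le> x' \<and> d \<le> d')"

definition achieves :: "config \<Rightarrow> config \<Rightarrow> bool" where
  "achieves E F \<longleftrightarrow> (\<exists>G. yields E G \<and> cfg_le F G)"

definition colored :: "nat \<Rightarrow> nat \<Rightarrow> nat \<Rightarrow> config" where
  "colored a b c = (a, b, c, 0, 0)"

definition sufficient :: "nat \<Rightarrow> nat \<Rightarrow> nat \<Rightarrow> bool" where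
  "sufficient a b c \<longleftrightarrow> achieves (colored a b c) (0, 0, 0, 0, 3)"

definition minimal_sufficient :: "nat \<Rightarrow> nat \<Rightarrow> nat \<Rightarrow> bool" where
  "minimal_sufficient a b c \<longleftrightarrow> sufficient a b c \<and>
     (\<forall>a' b' c'. a' \<le> a \<and> b' \<le> b \<and> c' \<le> c \<and> (a', b', c') \<noteq> (a, b, c)
        \<longrightarrow> \<not> achieves (colored a' b' c') (0, 0, 0, 0, 3))"

definition perm_eq :: "nat \<times> nat \<times> nat \<Rightarrow> nat \<times> nat \<times> nat \<Rightarrow> bool" where
  "perm_eq t s \<longleftrightarrow> (case t of (a,b,c) \<Rightarrow> case s of (a',b',c') \<Rightarrow>
      mset [a, b, c] = mset [a', b', c'])"

definition contains_perm :: "nat \<times> nat \<times> nat \<Rightarrow> nat \<times> nat \<times> nat \<Rightarrow> bool" where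
  "contains_perm t T \<longleftrightarrow> (\<exists>a' b' c'. perm_eq (a', b', c') T \<and>
      (case t of (a,b,c) \<Rightarrow> a' \<le> a \<and> b' \<le> b \<and> c' \<le> c))"

definition survives :: "nat \<Rightarrow> nat \<Rightarrow> nat \<Rightarrow> nat \<Rightarrow> bool" where
  "survives p a b c \<longleftrightarrow> achieves (colored a b c) (0, 0, 0, 0, p)"

definition nontrivial :: "nat \<Rightarrow> bool" where
  "nontrivial p \<longleftrightarrow> (\<exists>a b c. a + b + c = 2 * p \<and> survives p a b c)"

end

theory Submission imports Defs begin

definition CM :: "nat \<Rightarrow> nat \<Rightarrow> nat \<Rightarrow> bool" where
  "CM a b c \<longleftrightarrow> (3 \<le> a \<and> 3 \<le> b \<and> 1 \<le> c) \<or> (3 \<le> a \<and> 1 \<le> b \<and> 3 \<le> c) \<or> (1 \<le> a \<and> 3 \<le> b \<and> 3 \<le> c)"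
definition CN :: "nat \<Rightarrow> nat \<Rightarrow> nat \<Rightarrow> bool" where
  "CN a b c \<longleftrightarrow> (3 \<le> a \<and> 2 \<le> b \<and> 2 \<le> c) \<or> (2 \<le> a \<and> 3 \<le> b \<and> 2 \<le> c) \<or> (2 \<le> a \<and> 2 \<le> b \<and> 3 \<le> c)"

lemma mset3: "mset [a,b,c] = mset [x,y,z] \<longleftrightarrow>
   (a,b,c) \<in> {(x,y,z),(x,z,y),(y,x,z),(y,z,x),(z,x,y),(z,y,x)}"
  by (auto simp: add_eq_conv_ex)

lemma permM: "perm_eq (a,b,c) (3,3,1) \<longleftrightarrow> (a,b,c) \<in> {(3,3,1),(3,1,3),(1,3,3)}"
  unfolding perm_eq_def using mset3[of a b c 3 3 1] by auto
lemma permN: "perm_eq (a,b,c) (3,2,2) \<longleftrightarrow> (a,b,c) \<in> {(3,2,2),(2,3,2),(2,2,3)}"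
  unfolding perm_eq_def using mset3[of a b c 3 2 2] by auto

lemma contM: "contains_perm (a,b,c) (3,3,1) \<longleftrightarrow> CM a b c"
  unfolding contains_perm_def CM_def permM by auto
lemma contN: "contains_perm (a,b,c) (3,2,2) \<longleftrightarrow> CN a b c"
  unfolding contains_perm_def CN_def permN by auto

fun dm :: "config \<Rightarrow> nat" where "dm (a,b,c,x,d) = d"

definition r1 :: "config \<Rightarrow> config \<Rightarrow> bool" where
  "r1 s t \<longleftrightarrow> step s t \<and> dm s \<le> 2"

lemma r1_d: "r1 s t \<Longrightarrow> dm t = dm s + 1"
  unfolding r1_def by (auto elim: step.cases)

lemma step_gen: "step (a,b,c,x,d) t \<Longrightarrow> d \<le> 2 \<Longrightarrow> \<exists>u v w j. u \<le> 1 \<and> v \<le> 1 \<and> w \<le> 1 \<and> u+v+w+j = 3 \<and>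
   u \<le> a \<and> v \<le> b \<and> w \<le> c \<and> j \<le> x \<and> t = (a-u,b-v,c-w,x-j+1,d+1)"
  by (erule step.cases) (blast, simp)

lemma le1: "(u::nat) \<le> 1 \<Longrightarrow> u = 0 \<or> u = 1" by auto

lemma fin: "(sa::nat) \<le> 2 \<Longrightarrow> sb \<le> 2 \<Longrightarrow> sc \<le> 2 \<Longrightarrow> 4 \<le> sa+sb+sc \<Longrightarrow> 1+sa \<le> a \<Longrightarrow> 1+sb \<le> b \<Longrightarrow> 1+sc \<le> c \<Longrightarrow> CM a b c \<or> CN a b c"
  unfolding CM_def CN_def by presburger

lemma three: "r1 (a,b,c,0,0) v1 \<Longrightarrow> r1 v1 v2 \<Longrightarrow> r1 v2 v3 \<Longrightarrow> CM a b c \<or> CN a b c"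
proof -
  assume h1: "r1 (a,b,c,0,0) v1" and h2: "r1 v1 v2" and h3: "r1 v2 v3"
  have ex1: "\<exists>u v w j. u \<le> 1 \<and> v \<le> 1 \<and> w \<le> 1 \<and> u+v+w+j = 3 \<and>
   u \<le> a \<and> v \<le> b \<and> w \<le> c \<and> j \<le> 0 \<and> v1 = (a-u,b-v,c-w,0-j+1,0+1)"
    by (rule step_gen) (use h1 in \<open>auto simp: r1_def\<close>)
  then obtain u1 v1' w1 j1 where A: "u1 \<le> 1" "v1' \<le> 1" "w1 \<le> 1" "u1+v1'+w1+j1 = 3" "u1 \<le> a" "v1' \<le> b" "w1 \<le> c" "j1 \<le> 0"
     and e1: "v1 = (a-u1,b-v1',c-w1,0-j1+1,0+1)" by blast
  have "u1 = 1" "v1' = 1" "w1 = 1" using A by auto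
  with e1 A have e1': "v1 = (a-1,b-1,c-1,1,1)" and a: "1 \<le> a" "1 \<le> b" "1 \<le> c" by auto
  have ex2: "\<exists>u v w j. u \<le> 1 \<and> v \<le> 1 \<and> w \<le> 1 \<and> u+v+w+j = 3 \<and>
   u \<le> a-1 \<and> v \<le> b-1 \<and> w \<le> c-1 \<and> j \<le> 1 \<and> v2 = (a-1-u,b-1-v,c-1-w,1-j+1,1+1)"
    by (rule step_gen) (use h2 e1' in \<open>auto simp: r1_def\<close>)
  then obtain u2 v2' w2 j2 where B: "u2 \<le> 1" "v2' \<le> 1" "w2 \<le> 1" "u2+v2'+w2+j2 = 3" "u2 \<le> a-1" "v2' \<le> b-1" "w2 \<le> c-1" "j2 \<le> 1"
     and e2: "v2 = (a-1-u2,b-1-v2',c-1-w2,1-j2+1,1+1)" by blast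
  have ex3: "\<exists>u v w j. u \<le> 1 \<and> v \<le> 1 \<and> w \<le> 1 \<and> u+v+w+j = 3 \<and>
   u \<le> a-1-u2 \<and> v \<le> b-1-v2' \<and> w \<le> c-1-w2 \<and> j \<le> 1-j2+1 \<and> v3 = (a-1-u2-u,b-1-v2'-v,c-1-w2-w,1-j2+1-j+1,1+1+1)"
    by (rule step_gen) (use h3 e2 in \<open>auto simp: r1_def\<close>)
  then obtain u3 v3' w3 j3 where C: "u3 \<le> 1" "v3' \<le> 1" "w3 \<le> 1" "u3+v3'+w3+j3 = 3" "u3 \<le> a-1-u2" "v3' \<le> b-1-v2'" "w3 \<le> c-1-w2" "j3 \<le> 1-j2+1"
    by blast
  have f: "u2+u3 \<le> 2" "v2'+v3' \<le> 2" "w2+w3 \<le> 2" "4 \<le> (u2+u3)+(v2'+v3')+(w2+w3)"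
    "1+(u2+u3) \<le> a" "1+(v2'+v3') \<le> b" "1+(w2+w3) \<le> c" using a B C by linarith+
  show ?thesis by (rule fin[OF f])
qed


lemma r1_path:
  assumes "step\<^sup>*\<^sup>* s t" "dm s = 0" "K \<le> 3"
  shows "(\<exists>u. r1\<^sup>*\<^sup>* s u \<and> K \<le> dm u) \<or> (r1\<^sup>*\<^sup>* s t \<and> dm t < K)"
  using assms(1)
proof (induction rule: rtranclp_induct)
  case base
  then show ?case using assms(2) by (cases "K = 0") (blast, simp)
next
  case (step y z)
  from step.IH show ?case
  proof
    assume "\<exists>u. r1\<^sup>*\<^sup>* s u \<and> K \<le> dm u" then show ?case by blast
  next
    assume h: "r1\<^sup>*\<^sup>* s y \<and> dm y < K"
    then have r: "r1 y z" unfolding r1_def using step.hyps(2) assms(3) by auto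
    then have rz: "r1\<^sup>*\<^sup>* s z" using h by (meson rtranclp.rtrancl_into_rtrancl)
    show ?case
    proof (cases "dm z < K")
      case True then show ?thesis using rz by blast
    next
      case False then show ?thesis using rz by (meson not_less)
    qed
  qed
qed

lemma r1_first: "r1\<^sup>*\<^sup>* s u \<Longrightarrow> dm s < dm u \<Longrightarrow> \<exists>v. r1 s v \<and> r1\<^sup>*\<^sup>* v u"
  by (erule converse_rtranclpE) (simp, blast)

lemma cfg_le_dm: "cfg_le (0,0,0,0,K) G \<longleftrightarrow> K \<le> dm G"
  by (cases G) (auto simp: cfg_le_def)

lemma reach:
  assumes "achieves (colored a b c) (0,0,0,0,K)" "K \<le> 3"
  shows "\<exists>u. r1\<^sup>*\<^sup>* (a,b,c,0,0) u \<and> K \<le> dm u"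
proof -
  from assms(1) obtain G where G: "step\<^sup>*\<^sup>* (a,b,c,0,0) G" "K \<le> dm G"
    unfolding achieves_def yields_def colored_def cfg_le_dm by auto
  from r1_path[OF G(1) _ assms(2)] G(2) show ?thesis by auto
qed

lemma suff_imp: "achieves (colored a b c) (0,0,0,0,3) \<Longrightarrow> CM a b c \<or> CN a b c"
proof -
  assume "achieves (colored a b c) (0,0,0,0,3)"
  from reach[OF this] obtain u where u: "r1\<^sup>*\<^sup>* (a,b,c,0,0) u" "3 \<le> dm u" by auto
  from r1_first[OF u(1)] u(2) obtain v1 where v1: "r1 (a,b,c,0,0) v1" "r1\<^sup>*\<^sup>* v1 u" by auto
  have d1: "dm v1 = 1" using r1_d[OF v1(1)] by simp
  from r1_first[OF v1(2)] u(2) d1 obtain v2 where v2: "r1 v1 v2" "r1\<^sup>*\<^sup>* v2 u" by auto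
  have d2: "dm v2 = 2" using r1_d[OF v2(1)] d1 by simp
  from r1_first[OF v2(2)] u(2) d2 obtain v3 where v3: "r1 v2 v3" by auto
  from three[OF v1(1) v2(1) v3] show ?thesis .
qed

lemma no1: "achieves (colored a b c) (0,0,0,0,1) \<Longrightarrow> 3 \<le> a + b + c"
proof -
  assume "achieves (colored a b c) (0,0,0,0,1)"
  from reach[OF this] obtain u where u: "r1\<^sup>*\<^sup>* (a,b,c,0,0) u" "1 \<le> dm u" by auto
  from r1_first[OF u(1)] u(2) obtain v1 where h1: "r1 (a,b,c,0,0) v1" by auto
  have ex1: "\<exists>u v w j. u \<le> 1 \<and> v \<le> 1 \<and> w \<le> 1 \<and> u+v+w+j = 3 \<and>
   u \<le> a \<and> v \<le> b \<and> w \<le> c \<and> j \<le> 0 \<and> v1 = (a-u,b-v,c-w,0-j+1,0+1)"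
    by (rule step_gen) (use h1 in \<open>auto simp: r1_def\<close>)
  then obtain u1 v1' w1 j1 where A: "u1 \<le> 1" "v1' \<le> 1" "w1 \<le> 1" "u1+v1'+w1+j1 = 3" "u1 \<le> a" "v1' \<le> b" "w1 \<le> c" "j1 \<le> 0"
     by blast
  then show ?thesis by linarith
qed

lemma no2: "achieves (colored a b c) (0,0,0,0,2) \<Longrightarrow> 5 \<le> a + b + c"
proof -
  assume "achieves (colored a b c) (0,0,0,0,2)"
  from reach[OF this] obtain u where u: "r1\<^sup>*\<^sup>* (a,b,c,0,0) u" "2 \<le> dm u" by auto
  from r1_first[OF u(1)] u(2) obtain v1 where v1: "r1 (a,b,c,0,0) v1" "r1\<^sup>*\<^sup>* v1 u" by auto
  have d1: "dm v1 = 1" using r1_d[OF v1(1)] by simp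
  from r1_first[OF v1(2)] u(2) d1 obtain v2 where h2: "r1 v1 v2" by auto
  have ex1: "\<exists>u v w j. u \<le> 1 \<and> v \<le> 1 \<and> w \<le> 1 \<and> u+v+w+j = 3 \<and>
   u \<le> a \<and> v \<le> b \<and> w \<le> c \<and> j \<le> 0 \<and> v1 = (a-u,b-v,c-w,0-j+1,0+1)"
    by (rule step_gen) (use v1 in \<open>auto simp: r1_def\<close>)
  then obtain u1 v1' w1 j1 where A: "u1 \<le> 1" "v1' \<le> 1" "w1 \<le> 1" "u1+v1'+w1+j1 = 3" "u1 \<le> a" "v1' \<le> b" "w1 \<le> c" "j1 \<le> 0"
     and e1: "v1 = (a-u1,b-v1',c-w1,0-j1+1,0+1)" by blast
  have "u1 = 1" "v1' = 1" "w1 = 1" using A by auto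
  with e1 A have e1': "v1 = (a-1,b-1,c-1,1,1)" and a: "1 \<le> a" "1 \<le> b" "1 \<le> c" by auto
  have ex2: "\<exists>u v w j. u \<le> 1 \<and> v \<le> 1 \<and> w \<le> 1 \<and> u+v+w+j = 3 \<and>
   u \<le> a-1 \<and> v \<le> b-1 \<and> w \<le> c-1 \<and> j \<le> 1 \<and> v2 = (a-1-u,b-1-v,c-1-w,1-j+1,1+1)"
    by (rule step_gen) (use h2 e1' in \<open>auto simp: r1_def\<close>)
  then obtain u2 v2' w2 j2 where B: "u2 \<le> 1" "v2' \<le> 1" "w2 \<le> 1" "u2+v2'+w2+j2 = 3" "u2 \<le> a-1" "v2' \<le> b-1" "w2 \<le> c-1" "j2 \<le> 1"
     by blast
  show ?thesis using a B by linarith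
qed

lemma rule1': "\<lbrakk> u \<le> 1; v \<le> 1; w \<le> 1; u + v + w + j = 3;
           u \<le> a; v \<le> b; w \<le> c; j \<le> x; a' = a - u; b' = b - v; c' = c - w; x' = x - j + 1; d' = d + 1 \<rbrakk> \<Longrightarrow>
          step (a, b, c, x, d) (a', b', c', x', d')"
  using step.rule1 by blast

lemma rule2': "\<lbrakk> d \<ge> 3; x' = x + 7; d' = d - 3 \<rbrakk> \<Longrightarrow> step (a, b, c, x, d) (a, b, c, x', d')"
  using step.rule2 by blast

lemma jok: "3 \<le> x \<Longrightarrow> step (a,b,c,x,d) (a,b,c,x-2,d+1)"
  by (rule rule1'[where u=0 and v=0 and w=0 and j=3]) auto

lemma cycle: "3 \<le> d \<Longrightarrow> step\<^sup>*\<^sup>* (a,b,c,x,d) (a,b,c,x+1,d)"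
proof -
  assume d: "3 \<le> d"
  have s1: "step (a,b,c,x,d) (a,b,c,x+7,d-3)" by (rule rule2') (use d in auto)
  have s2: "step (a,b,c,x+7,d-3) (a,b,c,x+5,d-2)" by (rule rule1'[where u=0 and v=0 and w=0 and j=3]) (use d in auto)
  have s3: "step (a,b,c,x+5,d-2) (a,b,c,x+3,d-1)" by (rule rule1'[where u=0 and v=0 and w=0 and j=3]) (use d in auto)
  have s4: "step (a,b,c,x+3,d-1) (a,b,c,x+1,d)" by (rule rule1'[where u=0 and v=0 and w=0 and j=3]) (use d in auto)
  from s1 s2 s3 s4 show ?thesis by (meson rtranclp.rtrancl_into_rtrancl rtranclp.rtrancl_refl)
qed

lemma pump: "3 \<le> d \<Longrightarrow> step\<^sup>*\<^sup>* (a,b,c,x,d) (a,b,c,x+k,d)"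
proof (induction k)
  case 0 then show ?case by simp
next
  case (Suc k)
  then have "step\<^sup>*\<^sup>* (a,b,c,x+k,d) (a,b,c,x+k+1,d)" using cycle by blast
  with Suc show ?case by auto
qed

lemma spend: "2*n+1 \<le> x \<Longrightarrow> step\<^sup>*\<^sup>* (a,b,c,x,d) (a,b,c,x-2*n,d+n)"
proof (induction n)
  case 0 then show ?case by simp
next
  case (Suc n)
  then have h: "step\<^sup>*\<^sup>* (a,b,c,x,d) (a,b,c,x-2*n,d+n)" by simp
  have "step (a,b,c,x-2*n,d+n) (a,b,c,x-2*Suc n,d+Suc n)"
    by (rule rule1'[where u=0 and v=0 and w=0 and j=3]) (use Suc.prems in auto)
  with h show ?case by auto
qed

lemma big: "step\<^sup>*\<^sup>* E G \<Longrightarrow> 3 \<le> dm G \<Longrightarrow> achieves E (0,0,0,0,p)"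
proof -
  assume E: "step\<^sup>*\<^sup>* E G" and d: "3 \<le> dm G"
  obtain a b c x d where G: "G = (a,b,c,x,d)" by (cases G) auto
  have "step\<^sup>*\<^sup>* G (a,b,c,x+(2*p+1),d)" using pump[of d a b c x "2*p+1"] d G by simp
  moreover have "step\<^sup>*\<^sup>* (a,b,c,x+(2*p+1),d) (a,b,c,x+(2*p+1)-2*p,d+p)"
    by (rule spend) simp
  ultimately have "step\<^sup>*\<^sup>* E (a,b,c,x+(2*p+1)-2*p,d+p)" using E by auto
  then show ?thesis unfolding achieves_def yields_def cfg_le_def by fastforce
qed

lemma path3: "step s1 s2 \<Longrightarrow> step s2 s3 \<Longrightarrow> step s3 s4 \<Longrightarrow> step\<^sup>*\<^sup>* s1 s4"
  by (meson rtranclp.rtrancl_into_rtrancl rtranclp.rtrancl_refl)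
lemma cM1: "3 \<le> a \<Longrightarrow> 3 \<le> b \<Longrightarrow> 1 \<le> c \<Longrightarrow> \<exists>G. step\<^sup>*\<^sup>* (a,b,c,0,0) G \<and> 3 \<le> dm G"
proof -
  assume h: "3 \<le> a" "3 \<le> b" "1 \<le> c"
  have s1: "step (a,b,c,0,0) (a-1,b-1,c-1,1,1)" by (rule rule1'[where u=1 and v=1 and w=1 and j=0]) (use h in auto)
  have s2: "step (a-1,b-1,c-1,1,1) (a-2,b-2,c-1,1,2)" by (rule rule1'[where u=1 and v=1 and w=0 and j=1]) (use h in auto)
  have s3: "step (a-2,b-2,c-1,1,2) (a-3,b-3,c-1,1,3)" by (rule rule1'[where u=1 and v=1 and w=0 and j=1]) (use h in auto)
  show ?thesis using path3[OF s1 s2 s3] by (intro exI[of _ "(a-3,b-3,c-1,1,3)"]) simp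
qed

lemma cM2: "3 \<le> a \<Longrightarrow> 1 \<le> b \<Longrightarrow> 3 \<le> c \<Longrightarrow> \<exists>G. step\<^sup>*\<^sup>* (a,b,c,0,0) G \<and> 3 \<le> dm G"
proof -
  assume h: "3 \<le> a" "1 \<le> b" "3 \<le> c"
  have s1: "step (a,b,c,0,0) (a-1,b-1,c-1,1,1)" by (rule rule1'[where u=1 and v=1 and w=1 and j=0]) (use h in auto)
  have s2: "step (a-1,b-1,c-1,1,1) (a-2,b-1,c-2,1,2)" by (rule rule1'[where u=1 and v=0 and w=1 and j=1]) (use h in auto)
  have s3: "step (a-2,b-1,c-2,1,2) (a-3,b-1,c-3,1,3)" by (rule rule1'[where u=1 and v=0 and w=1 and j=1]) (use h in auto)
  show ?thesis using path3[OF s1 s2 s3] by (intro exI[of _ "(a-3,b-1,c-3,1,3)"]) simp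
qed

lemma cM3: "1 \<le> a \<Longrightarrow> 3 \<le> b \<Longrightarrow> 3 \<le> c \<Longrightarrow> \<exists>G. step\<^sup>*\<^sup>* (a,b,c,0,0) G \<and> 3 \<le> dm G"
proof -
  assume h: "1 \<le> a" "3 \<le> b" "3 \<le> c"
  have s1: "step (a,b,c,0,0) (a-1,b-1,c-1,1,1)" by (rule rule1'[where u=1 and v=1 and w=1 and j=0]) (use h in auto)
  have s2: "step (a-1,b-1,c-1,1,1) (a-1,b-2,c-2,1,2)" by (rule rule1'[where u=0 and v=1 and w=1 and j=1]) (use h in auto)
  have s3: "step (a-1,b-2,c-2,1,2) (a-1,b-3,c-3,1,3)" by (rule rule1'[where u=0 and v=1 and w=1 and j=1]) (use h in auto)
  show ?thesis using path3[OF s1 s2 s3] by (intro exI[of _ "(a-1,b-3,c-3,1,3)"]) simp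
qed

lemma cN4: "3 \<le> a \<Longrightarrow> 2 \<le> b \<Longrightarrow> 2 \<le> c \<Longrightarrow> \<exists>G. step\<^sup>*\<^sup>* (a,b,c,0,0) G \<and> 3 \<le> dm G"
proof -
  assume h: "3 \<le> a" "2 \<le> b" "2 \<le> c"
  have s1: "step (a,b,c,0,0) (a-1,b-1,c-1,1,1)" by (rule rule1'[where u=1 and v=1 and w=1 and j=0]) (use h in auto)
  have s2: "step (a-1,b-1,c-1,1,1) (a-2,b-2,c-2,2,2)" by (rule rule1'[where u=1 and v=1 and w=1 and j=0]) (use h in auto)
  have s3: "step (a-2,b-2,c-2,2,2) (a-3,b-2,c-2,1,3)" by (rule rule1'[where u=1 and v=0 and w=0 and j=2]) (use h in auto)
  show ?thesis using path3[OF s1 s2 s3] by (intro exI[of _ "(a-3,b-2,c-2,1,3)"]) simp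
qed

lemma cN5: "2 \<le> a \<Longrightarrow> 3 \<le> b \<Longrightarrow> 2 \<le> c \<Longrightarrow> \<exists>G. step\<^sup>*\<^sup>* (a,b,c,0,0) G \<and> 3 \<le> dm G"
proof -
  assume h: "2 \<le> a" "3 \<le> b" "2 \<le> c"
  have s1: "step (a,b,c,0,0) (a-1,b-1,c-1,1,1)" by (rule rule1'[where u=1 and v=1 and w=1 and j=0]) (use h in auto)
  have s2: "step (a-1,b-1,c-1,1,1) (a-2,b-2,c-2,2,2)" by (rule rule1'[where u=1 and v=1 and w=1 and j=0]) (use h in auto)
  have s3: "step (a-2,b-2,c-2,2,2) (a-2,b-3,c-2,1,3)" by (rule rule1'[where u=0 and v=1 and w=0 and j=2]) (use h in auto)
  show ?thesis using path3[OF s1 s2 s3] by (intro exI[of _ "(a-2,b-3,c-2,1,3)"]) simp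
qed

lemma cN6: "2 \<le> a \<Longrightarrow> 2 \<le> b \<Longrightarrow> 3 \<le> c \<Longrightarrow> \<exists>G. step\<^sup>*\<^sup>* (a,b,c,0,0) G \<and> 3 \<le> dm G"
proof -
  assume h: "2 \<le> a" "2 \<le> b" "3 \<le> c"
  have s1: "step (a,b,c,0,0) (a-1,b-1,c-1,1,1)" by (rule rule1'[where u=1 and v=1 and w=1 and j=0]) (use h in auto)
  have s2: "step (a-1,b-1,c-1,1,1) (a-2,b-2,c-2,2,2)" by (rule rule1'[where u=1 and v=1 and w=1 and j=0]) (use h in auto)
  have s3: "step (a-2,b-2,c-2,2,2) (a-2,b-2,c-3,1,3)" by (rule rule1'[where u=0 and v=0 and w=1 and j=2]) (use h in auto)
  show ?thesis using path3[OF s1 s2 s3] by (intro exI[of _ "(a-2,b-2,c-3,1,3)"]) simp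
qed


lemma exG: "CM a b c \<or> CN a b c \<Longrightarrow> \<exists>G. step\<^sup>*\<^sup>* (a,b,c,0,0) G \<and> 3 \<le> dm G"
  unfolding CM_def CN_def
  apply (elim disjE conjE)
  apply (rule cM1; assumption)
  apply (rule cM2; assumption)
  apply (rule cM3; assumption)
  apply (rule cN4; assumption)
  apply (rule cN5; assumption)
  apply (rule cN6; assumption)
  done

lemma suff_all: "CM a b c \<or> CN a b c \<Longrightarrow> achieves (colored a b c) (0,0,0,0,p)"
proof -
  assume "CM a b c \<or> CN a b c"
  then obtain G where "step\<^sup>*\<^sup>* (a,b,c,0,0) G" "3 \<le> dm G" using exG by blast
  then show ?thesis using big unfolding colored_def by blast
qed

lemma suff_iff: "achieves (colored a b c) (0,0,0,0,3) \<longleftrightarrow> CM a b c \<or> CN a b c"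
  using suff_all suff_imp by blast

lemma ach_mono: "achieves E (0,0,0,0,p) \<Longrightarrow> q \<le> p \<Longrightarrow> achieves E (0,0,0,0,q)"
  unfolding achieves_def cfg_le_dm by (meson le_trans)

lemma surv: "1 \<le> p \<Longrightarrow> a + b + c = 2 * p \<Longrightarrow> survives p a b c \<longleftrightarrow> CM a b c \<or> CN a b c"
proof
  assume p: "1 \<le> p" and s: "a + b + c = 2 * p" and h: "survives p a b c"
  show "CM a b c \<or> CN a b c"
  proof (cases "p \<ge> 3")
    case True
    then have "achieves (colored a b c) (0,0,0,0,3)" using h ach_mono[of _ p 3] unfolding survives_def by blast
    then show ?thesis by (rule suff_imp)
  next
    case False
    then have "p = 1 \<or> p = 2" using p by auto
    then show ?thesis
    proof
      assume p1: "p = 1"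
      then have "3 \<le> a + b + c" using h no1 unfolding survives_def by blast
      then show ?thesis using s p1 by simp
    next
      assume p2: "p = 2"
      then have "5 \<le> a + b + c" using h no2 unfolding survives_def by blast
      then show ?thesis using s p2 by simp
    qed
  qed
next
  assume "CM a b c \<or> CN a b c" then show "survives p a b c" unfolding survives_def using suff_all by blast
qed

lemma minsuf_iff: "minimal_sufficient a b c \<longleftrightarrow> (CM a b c \<or> CN a b c) \<and>
   (\<forall>a' b' c'. a' \<le> a \<and> b' \<le> b \<and> c' \<le> c \<and> (a', b', c') \<noteq> (a, b, c) \<longrightarrow> \<not> (CM a' b' c' \<or> CN a' b' c'))"
  unfolding minimal_sufficient_def sufficient_def suff_iff ..

lemma ms1: "minimal_sufficient 3 3 1" unfolding minsuf_iff CM_def CN_def by auto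
lemma ms2: "minimal_sufficient 3 1 3" unfolding minsuf_iff CM_def CN_def by auto
lemma ms3: "minimal_sufficient 1 3 3" unfolding minsuf_iff CM_def CN_def by auto
lemma ms4: "minimal_sufficient 3 2 2" unfolding minsuf_iff CM_def CN_def by auto
lemma ms5: "minimal_sufficient 2 3 2" unfolding minsuf_iff CM_def CN_def by auto
lemma ms6: "minimal_sufficient 2 2 3" unfolding minsuf_iff CM_def CN_def by auto

lemma msiff: "minimal_sufficient a b c \<longleftrightarrow> perm_eq (a,b,c) (3,3,1) \<or> perm_eq (a,b,c) (3,2,2)"
proof
  assume h: "minimal_sufficient a b c"
  then have C: "CM a b c \<or> CN a b c" unfolding minsuf_iff by blast
  have H: "\<And>a' b' c'. a' \<le> a \<Longrightarrow> b' \<le> b \<Longrightarrow> c' \<le> c \<Longrightarrow> CM a' b' c' \<or> CN a' b' c' \<Longrightarrow> (a',b',c') = (a,b,c)"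
    using h unfolding minsuf_iff by blast
  have m1: "CM 3 3 1" "CM 3 1 3" "CM 1 3 3" "CN 3 2 2" "CN 2 3 2" "CN 2 2 3" unfolding CM_def CN_def by auto
  show "perm_eq (a,b,c) (3,3,1) \<or> perm_eq (a,b,c) (3,2,2)"
    using C[unfolded CM_def CN_def]
  proof (elim disjE conjE)
    assume "3 \<le> a" "3 \<le> b" "1 \<le> c" then have "(3,3,1) = (a,b,c)" using H m1(1) by blast
    then show ?thesis by (auto simp: perm_eq_def)
  next
    assume "3 \<le> a" "1 \<le> b" "3 \<le> c" then have "(3,1,3) = (a,b,c)" using H m1(2) by blast
    then show ?thesis by (auto simp: perm_eq_def)
  next
    assume "1 \<le> a" "3 \<le> b" "3 \<le> c" then have "(1,3,3) = (a,b,c)" using H m1(3) by blast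
    then show ?thesis by (auto simp: perm_eq_def)
  next
    assume "3 \<le> a" "2 \<le> b" "2 \<le> c" then have "(3,2,2) = (a,b,c)" using H m1(4) by blast
    then show ?thesis by (auto simp: perm_eq_def)
  next
    assume "2 \<le> a" "3 \<le> b" "2 \<le> c" then have "(2,3,2) = (a,b,c)" using H m1(5) by blast
    then show ?thesis by (auto simp: perm_eq_def)
  next
    assume "2 \<le> a" "2 \<le> b" "3 \<le> c" then have "(2,2,3) = (a,b,c)" using H m1(6) by blast
    then show ?thesis by (auto simp: perm_eq_def)
  qed
next
  assume "perm_eq (a,b,c) (3,3,1) \<or> perm_eq (a,b,c) (3,2,2)"
  then show "minimal_sufficient a b c"
    unfolding permM permN using ms1 ms2 ms3 ms4 ms5 ms6 by auto
qed

theorem theorem4p2: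
  shows "{(a, b, c). minimal_sufficient a b c} =
           {t. perm_eq t (3, 3, 1)} \<union> {t. perm_eq t (3, 2, 2)}
     \<and> (\<forall>p a b c. p \<ge> 1 \<longrightarrow> a + b + c = 2 * p \<longrightarrow>
           (survives p a b c \<longleftrightarrow>
            (contains_perm (a, b, c) (3, 3, 1) \<or> contains_perm (a, b, c) (3, 2, 2))))
     \<and> (\<forall>p. p \<ge> 1 \<longrightarrow> (nontrivial p \<longleftrightarrow> p \<ge> 4))"
proof (intro conjI allI impI)
  show "{(a, b, c). minimal_sufficient a b c} = {t. perm_eq t (3, 3, 1)} \<union> {t. perm_eq t (3, 2, 2)}"
    using msiff by auto
next
  fix p a b c :: nat assume "1 \<le> p" "a + b + c = 2 * p"
  then show "survives p a b c \<longleftrightarrow> (contains_perm (a, b, c) (3, 3, 1) \<or> contains_perm (a, b, c) (3, 2, 2))"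
    unfolding contM contN by (rule surv)
next
  fix p :: nat assume p: "1 \<le> p"
  show "nontrivial p \<longleftrightarrow> p \<ge> 4"
  proof
    assume "nontrivial p"
    then obtain a b c where s: "a + b + c = 2 * p" and sv: "survives p a b c" unfolding nontrivial_def by blast
    have "CM a b c \<or> CN a b c" using surv[OF p s] sv by blast
    then have "7 \<le> a + b + c" unfolding CM_def CN_def by auto
    then show "p \<ge> 4" using s by simp
  next
    assume "p \<ge> 4"
    then have "3 + 3 + (2*p - 6) = 2 * p" "CM 3 3 (2*p-6)" unfolding CM_def by auto
    then show "nontrivial p" unfolding nontrivial_def using surv[OF p] by blast
  qed
qed

end
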